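(* Let $\mu=(\mu_1\geq\mu_2\geq\dots\geq\mu_k>\mu_{k+1}=0)$ be a partition, let $\bar{\mu}=(\bar\mu_1\ge\bar\mu_2\ge\cdots)$ be its conjugate partition, and let $y$ be an indeterminate. Then for every integer $\ell$ with $1\le \ell\le \mu_1$, $$ \frac{1}{\mu_1+y}\prod_{1\le i\le\bar{\mu}_{\ell}}\frac{\mu_i-i+1+y}{\mu_i-i+y}=\frac{1}{\ell-\bar{\mu}_{\ell}-1+y}\prod_{\ell\le j\le \mu_1}\frac{j-\bar{\mu}_j-1+y}{j-\bar{\mu}_j+y}$$ as rational functions in $y$.
   Context: For a partition $\mu$, the conjugate partition $\bar\mu$ is defined by: $\bar{\mu}_j$ is the number of indices $i$ with $\mu_i\ge j$ (the number of nodes in column $j$ of the Young diagram of $\mu$). *)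

theory Defs
  imports "HOL-Computational_Algebra.Polynomial" "HOL-Computational_Algebra.Fraction_Field"
begin

text \<open>A partition is a function mu :: nat => nat, indexed from 1, weakly decreasing on the
positive integers and eventually zero. Its conjugate: the number of indices i >= 1 with
mu i >= j.\<close>

definition conj_part :: "(nat \<Rightarrow> nat) \<Rightarrow> nat \<Rightarrow> nat" where
  "conj_part mu j = card {i. 1 \<le> i \<and> j \<le> mu i}"

definition yvar :: "rat poly fract" where
  "yvar = Fract [:0, 1:] 1"

end

theory Submission
  imports Defs
begin
lemma of_int_fract': "(of_int t :: 'a::idom fract) = Fract (of_int t) 1"
proof -
  obtain n where "t = int n \<or> t = - int n" by (metis int_cases2)
  thus ?thesis
  proof
    assume "t = int n" then show ?thesis by (metis of_int_of_nat_eq of_nat_fract)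
  next
    assume h: "t = - int n"
    have "(of_int t :: 'a fract) = - of_nat n" using h by simp
    also have "\<dots> = - Fract (of_nat n) 1" by (simp only: of_nat_fract)
    also have "\<dots> = Fract (- of_nat n) 1" by simp
    also have "- of_nat n = (of_int t :: 'a)" using h by simp
    finally show ?thesis .
  qed
qed
lemma yf_nz: "of_int t + yvar \<noteq> (0::rat poly fract)"
proof -
  have "of_int t + yvar = Fract ([:of_int t:] + [:0,1:]) 1"
    unfolding yvar_def by (simp add: of_int_fract' of_int_poly)
  also have "[:of_int t:] + [:0,1:] = [:of_int t, 1:]" by simp
  finally show ?thesis by (simp add: eq_fract Zero_fract_def)
qed
definition yf :: "int \<Rightarrow> rat poly fract" where "yf t = of_int t + yvar"

lemma yf_nz': "yf t \<noteq> 0" unfolding yf_def by (rule yf_nz)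

lemma tele:
  assumes "a \<le> b"
  shows "(\<Prod>i\<in>{Suc a..b}. yf (L - int i + 1) / yf (L - int i)) = yf (L - int a) / yf (L - int b)"
  using assms
proof (induction b rule: dec_induct)
  case base
  then show ?case using yf_nz'[of "L - int a"] by simp
next
  case (step n)
  have "{Suc a..Suc n} = insert (Suc n) {Suc a..n}" using step.hyps by auto
  then have "(\<Prod>i\<in>{Suc a..Suc n}. yf (L - int i + 1) / yf (L - int i))
     = yf (L - int (Suc n) + 1) / yf (L - int (Suc n)) * (\<Prod>i\<in>{Suc a..n}. yf (L - int i + 1) / yf (L - int i))"
    by simp
  also have "L - int (Suc n) + 1 = L - int n" by simp
  finally show ?case using step.IH yf_nz'[of "L - int n"] by simp
qed

lemma cset:
  fixes mu :: "nat \<Rightarrow> nat"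
  assumes mono: "\<forall>i j. 1 \<le> i \<longrightarrow> i \<le> j \<longrightarrow> mu j \<le> mu i"
    and zero: "\<forall>i>k. mu i = 0" and l: "1 \<le> l"
  shows "{i. 1 \<le> i \<and> l \<le> mu i} = {1..conj_part mu l}"
proof -
  define S where "S = {i. 1 \<le> i \<and> l \<le> mu i}"
  have sub: "S \<subseteq> {1..k}" unfolding S_def using zero l by (auto simp: not_le[symmetric])
  then have fin: "finite S" by (rule finite_subset) simp
  have dc: "\<And>i j. i \<in> S \<Longrightarrow> 1 \<le> j \<Longrightarrow> j \<le> i \<Longrightarrow> j \<in> S"
    unfolding S_def using mono by (auto intro: le_trans)
  have "S = {1..card S}"
  proof (cases "S = {}")
    case True then show ?thesis by simp
  next
    case False
    define n where "n = Max S"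
    have nS: "n \<in> S" using False fin n_def by simp
    have "S = {1..n}"
    proof
      show "S \<subseteq> {1..n}" using fin n_def by (auto simp: S_def)
      show "{1..n} \<subseteq> S" using dc nS by auto
    qed
    then show ?thesis by simp
  qed
  then show ?thesis unfolding S_def conj_part_def by simp
qed

lemma cset_iff:
  fixes mu :: "nat \<Rightarrow> nat"
  assumes mono: "\<forall>i j. 1 \<le> i \<longrightarrow> i \<le> j \<longrightarrow> mu j \<le> mu i"
    and zero: "\<forall>i>k. mu i = 0" and l: "1 \<le> l" and i: "1 \<le> i"
  shows "i \<le> conj_part mu l \<longleftrightarrow> l \<le> mu i"
  using cset[OF mono zero l] i by (auto simp: set_eq_iff)
theorem lemma2p7:
  fixes mu :: "nat \<Rightarrow> nat" and k :: nat and l :: nat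
  assumes mono: "\<forall>i j. 1 \<le> i \<longrightarrow> i \<le> j \<longrightarrow> mu j \<le> mu i"
    and muk: "1 \<le> k" and pos: "mu k > 0" and zero: "\<forall>i>k. mu i = 0"
    and l1: "1 \<le> l" and l2: "l \<le> mu 1"
  shows "(1 / (of_nat (mu 1) + yvar)) *
           (\<Prod>i\<in>{1..conj_part mu l}.
              (of_int (int (mu i) - int i + 1) + yvar) / (of_int (int (mu i) - int i) + yvar))
         = (1 / (of_int (int l - int (conj_part mu l) - 1) + yvar)) *
           (\<Prod>j\<in>{l..mu 1}.
              (of_int (int j - int (conj_part mu j) - 1) + yvar) / (of_int (int j - int (conj_part mu j)) + yvar))"
proof -
  define m where "m = mu 1"
  define c where "c = conj_part mu"
  have ci: "\<And>l i. 1 \<le> l \<Longrightarrow> 1 \<le> i \<Longrightarrow> i \<le> c l \<longleftrightarrow> l \<le> mu i"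
    unfolding c_def using cset_iff[OF mono zero] by blast
  have mu_le: "\<And>i. 1 \<le> i \<Longrightarrow> mu i \<le> m" unfolding m_def using mono by auto
  have e1: "of_nat (mu 1) + yvar = yf (int m)" unfolding yf_def m_def by simp
  define P where "P l \<longleftrightarrow> (1 / yf (int m)) * (\<Prod>i\<in>{1..c l}. yf (int (mu i) - int i + 1) / yf (int (mu i) - int i))
     = (1 / yf (int l - int (c l) - 1)) * (\<Prod>j\<in>{l..m}. yf (int j - int (c j) - 1) / yf (int j - int (c j)))" for l
  have "1 \<le> l \<Longrightarrow> P l" using l2[folded m_def]
  proof (induction l rule: inc_induct)
    case base
    have m1: "1 \<le> m" using l1 l2 m_def by simp
    have "(\<Prod>i\<in>{1..c m}. yf (int (mu i) - int i + 1) / yf (int (mu i) - int i))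
        = (\<Prod>i\<in>{Suc 0..c m}. yf (int m - int i + 1) / yf (int m - int i))"
    proof (rule prod.cong, simp)
      fix i assume "i \<in> {Suc 0..c m}"
      then have "mu i = m" using ci[OF m1, of i] mu_le[of i] by auto
      then show "yf (int (mu i) - int i + 1) / yf (int (mu i) - int i) = yf (int m - int i + 1) / yf (int m - int i)" by simp
    qed
    also have "\<dots> = yf (int m - int 0) / yf (int m - int (c m))" by (rule tele) simp
    finally have L: "(\<Prod>i\<in>{1..c m}. yf (int (mu i) - int i + 1) / yf (int (mu i) - int i)) = yf (int m) / yf (int m - int (c m))" by simp
    show ?case unfolding P_def L using yf_nz'[of "int m"] yf_nz'[of "int m - int (c m)"] yf_nz'[of "int m - int (c m) - 1"]
      by simp
  next
    case (step n)
    have n1: "1 \<le> n" using step.prems .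
    have sn1: "1 \<le> Suc n" by simp
    have cle: "c (Suc n) \<le> c n"
    proof (cases "c (Suc n) = 0")
      case False
      then have "Suc n \<le> mu (c (Suc n))" using ci[OF sn1, of "c (Suc n)"] by simp
      then show ?thesis using ci[OF n1, of "c (Suc n)"] False by simp
    qed simp
    have split: "{1..c n} = {1..c (Suc n)} \<union> {Suc (c (Suc n))..c n}" using cle by auto
    have "(\<Prod>i\<in>{1..c n}. yf (int (mu i) - int i + 1) / yf (int (mu i) - int i))
       = (\<Prod>i\<in>{1..c (Suc n)}. yf (int (mu i) - int i + 1) / yf (int (mu i) - int i))
         * (\<Prod>i\<in>{Suc (c (Suc n))..c n}. yf (int (mu i) - int i + 1) / yf (int (mu i) - int i))"
      unfolding split by (rule prod.union_disjoint) auto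
    also have "(\<Prod>i\<in>{Suc (c (Suc n))..c n}. yf (int (mu i) - int i + 1) / yf (int (mu i) - int i))
        = (\<Prod>i\<in>{Suc (c (Suc n))..c n}. yf (int n - int i + 1) / yf (int n - int i))"
    proof (rule prod.cong[OF refl])
      fix i assume i: "i \<in> {Suc (c (Suc n))..c n}"
      then have "mu i = n" using ci[OF n1, of i] ci[OF sn1, of i] by auto
      then show "yf (int (mu i) - int i + 1) / yf (int (mu i) - int i) = yf (int n - int i + 1) / yf (int n - int i)" by simp
    qed
    also have "\<dots> = yf (int n - int (c (Suc n))) / yf (int n - int (c n))" by (rule tele[OF cle])
    finally have L: "(\<Prod>i\<in>{1..c n}. yf (int (mu i) - int i + 1) / yf (int (mu i) - int i))
       = (\<Prod>i\<in>{1..c (Suc n)}. yf (int (mu i) - int i + 1) / yf (int (mu i) - int i))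
         * (yf (int n - int (c (Suc n))) / yf (int n - int (c n)))" .
    have R: "(\<Prod>j\<in>{n..m}. yf (int j - int (c j) - 1) / yf (int j - int (c j)))
       = yf (int n - int (c n) - 1) / yf (int n - int (c n)) * (\<Prod>j\<in>{Suc n..m}. yf (int j - int (c j) - 1) / yf (int j - int (c j)))"
      using step.hyps by (simp add: prod.atLeast_Suc_atMost)
    have IH: "(1 / yf (int m)) * (\<Prod>i\<in>{1..c (Suc n)}. yf (int (mu i) - int i + 1) / yf (int (mu i) - int i))
     = (1 / yf (int n - int (c (Suc n)))) * (\<Prod>j\<in>{Suc n..m}. yf (int j - int (c j) - 1) / yf (int j - int (c j)))"
      using step.IH[OF sn1] unfolding P_def by simp
    show ?case unfolding P_def L R
      using IH yf_nz'[of "int n - int (c (Suc n))"] yf_nz'[of "int n - int (c n)"] yf_nz'[of "int n - int (c n) - 1"]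
      by (simp add: field_simps)
  qed
  then have "P l" using l1 .
  then show ?thesis unfolding P_def c_def m_def e1[unfolded m_def] by (simp add: yf_def)
qed
end
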